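(* Let $T>0$, $I=[0,T]$, $\nu_1,\nu_2\in\mathbb{R}$, $p>1$. Let $\Phi:\mathbb{R}\to\mathbb{R}$ be a strictly increasing homeomorphism; let $A:W^{1,p}(I)\to C(I,\mathbb{R})$, $x\mapsto A_x$, be continuous w.r.t. the uniform topology, with $h_1,h_2\in C(I,\mathbb{R})$, $h_1,h_2\ge0$, $1/h_1,1/h_2\in L^p(I)$ and $h_1(t)\le A_x(t)\le h_2(t)$ for all $x\in W^{1,p}(I)$, $t\in I$; let $F:W^{1,p}(I)\to L^1(I)$, $x\mapsto F_x$, be continuous with $|F_x(t)|\le\psi(t)$ for all $x$ and a.e. $t$, for some non-negative $\psi\in L^1(I)$. Set $\mathcal{F}_x(t):=\int_0^tF_x(s)\,ds$. Then for every $x\in W^{1,p}(I)$ there exists a unique $\xi_x\in\mathbb{R}$ such that $\int_0^T\frac{1}{A_x(t)}\Phi^{-1}(\xi_x+\mathcal{F}_x(t))\,dt=\nu_2-\nu_1$, and there exists a constant $\mathbf{c}_0>0$ such that $|\xi_x|\le\mathbf{c}_0$ for every $x\in W^{1,p}(I)$.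
   Context: $W^{1,p}(I)$ is regarded as a subspace of $C(I,\mathbb{R})$; continuity of $A$ refers to the sup norm on both sides. *)

theory Defs
  imports "HOL-Analysis.Analysis"
begin

definition Lp_space :: "real \<Rightarrow> real \<Rightarrow> (real \<Rightarrow> real) set" where
  "Lp_space T p = {g. g \<in> borel_measurable (lebesgue_on {0..T}) \<and>
                       integrable (lebesgue_on {0..T}) (\<lambda>t. \<bar>g t\<bar> powr p)}"

text \<open>W^{1,p}(I), via the (continuous) absolutely continuous representative:
  x(t) = x(0) + int_0^t g with g in L^p(I). Only values on I matter.\<close>
definition W1p :: "real \<Rightarrow> real \<Rightarrow> (real \<Rightarrow> real) set" where
  "W1p T p = {x. \<exists>g \<in> Lp_space T p. \<forall>t\<in>{0..T}.
                   x t = x 0 + (LINT s|lebesgue_on {0..t}. g s)}"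

definition sup_dist :: "real \<Rightarrow> (real \<Rightarrow> real) \<Rightarrow> (real \<Rightarrow> real) \<Rightarrow> real" where
  "sup_dist T x y = (SUP t\<in>{0..T}. \<bar>x t - y t\<bar>)"

definition L1_dist :: "real \<Rightarrow> (real \<Rightarrow> real) \<Rightarrow> (real \<Rightarrow> real) \<Rightarrow> real" where
  "L1_dist T f g = (LINT t|lebesgue_on {0..T}. \<bar>f t - g t\<bar>)"

end

theory Submission
  imports Defs
begin


lemma int_prod:
  fixes a c g :: "real \<Rightarrow> real"
  assumes a_int: "integrable (lebesgue_on {0..T}) a"
    and a_nn: "\<forall>t\<in>{0..T}. a t \<ge> 0"
    and c_cont: "continuous_on {0..T} c"
    and g_cont: "continuous_on UNIV g"
  shows "integrable (lebesgue_on {0..T}) (\<lambda>t. a t * g (\<xi> + c t))"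
proof -
  have hc: "continuous_on {0..T} (\<lambda>t. g (\<xi> + c t))"
    by (intro continuous_on_compose2[OF g_cont] continuous_intros c_cont) auto
  have "compact ((\<lambda>t. g (\<xi> + c t)) ` {0..T})"
    by (rule compact_continuous_image[OF hc]) simp
  then obtain B where B: "\<forall>y\<in>(\<lambda>t. g (\<xi> + c t)) ` {0..T}. norm y \<le> B"
    using compact_imp_bounded bounded_iff by blast
  have hm: "(\<lambda>t. g (\<xi> + c t)) \<in> borel_measurable (lebesgue_on {0..T})"
    by (rule continuous_imp_measurable_on_sets_lebesgue[OF hc]) simp
  have am: "a \<in> borel_measurable (lebesgue_on {0..T})" using a_int by auto
  show ?thesis
  proof (rule Bochner_Integration.integrable_bound[where f="\<lambda>t. B * a t"])
    show "integrable (lebesgue_on {0..T}) (\<lambda>t. B * a t)" using a_int by auto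
    show "(\<lambda>t. a t * g (\<xi> + c t)) \<in> borel_measurable (lebesgue_on {0..T})"
      using am hm by measurable
    show "AE t in lebesgue_on {0..T}. norm (a t * g (\<xi> + c t)) \<le> norm (B * a t)"
    proof (rule AE_I2)
      fix t assume "t \<in> space (lebesgue_on {0..T})"
      then have t: "t \<in> {0..T}" by simp
      have "\<bar>g (\<xi> + c t)\<bar> \<le> B" using B t by auto
      then show "norm (a t * g (\<xi> + c t)) \<le> norm (B * a t)"
        using a_nn t by (auto simp: abs_mult mult.commute[of B] intro!: mult_left_mono)
    qed
  qed
qed

lemma AE_False_pos:
  assumes "(T::real) > 0" shows "\<not> (AE t in lebesgue_on {0..T}. False)"
proof
  assume "AE t in lebesgue_on {0..T}. False"
  then have "ae_filter (lebesgue_on {0..T}) = bot" using trivial_limit_def by blast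
  then have "emeasure (lebesgue_on {0..T}) {0..T} = 0" by (simp add: ae_filter_eq_bot_iff)
  moreover have "emeasure (lebesgue_on {0..T}) {0..T} = ennreal T"
    using assms by (simp add: emeasure_restrict_space)
  ultimately show False using assms by simp
qed

lemma G_strict:
  fixes a c g :: "real \<Rightarrow> real"
  assumes T: "T > 0"
    and a_int: "integrable (lebesgue_on {0..T}) a"
    and a_nn: "\<forall>t\<in>{0..T}. a t \<ge> 0"
    and a_pos: "AE t in lebesgue_on {0..T}. a t > 0"
    and c_cont: "continuous_on {0..T} c"
    and g_cont: "continuous_on UNIV g"
    and g_mono: "strict_mono g"
    and lt: "\<xi>1 < \<xi>2"
  shows "(LINT t|lebesgue_on {0..T}. a t * g (\<xi>1 + c t)) < (LINT t|lebesgue_on {0..T}. a t * g (\<xi>2 + c t))"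
proof -
  let ?M = "lebesgue_on {0..T}"
  let ?d = "\<lambda>t. a t * g (\<xi>2 + c t) - a t * g (\<xi>1 + c t)"
  have i1: "integrable ?M (\<lambda>t. a t * g (\<xi>1 + c t))" by (rule int_prod[OF a_int a_nn c_cont g_cont])
  have i2: "integrable ?M (\<lambda>t. a t * g (\<xi>2 + c t))" by (rule int_prod[OF a_int a_nn c_cont g_cont])
  have id: "integrable ?M ?d" using i1 i2 by auto
  have gm: "g (\<xi>1 + c t) < g (\<xi>2 + c t)" for t using g_mono lt by (simp add: strict_mono_less)
  have nn: "AE t in ?M. 0 \<le> ?d t"
  proof (rule AE_I2)
    fix t assume "t \<in> space ?M"
    then have "a t \<ge> 0" using a_nn by simp
    then show "0 \<le> ?d t" using gm[of t] by (simp add: right_diff_distrib[symmetric])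
  qed
  have "integral\<^sup>L ?M ?d \<noteq> 0"
  proof
    assume "integral\<^sup>L ?M ?d = 0"
    then have "AE t in ?M. ?d t = 0" using integral_nonneg_eq_0_iff_AE[OF id nn] by simp
    then have "AE t in ?M. False" using a_pos
    proof eventually_elim
      case (elim t)
      then show ?case using gm[of t]
        by (metis mult_less_cancel_left_pos right_diff_distrib' eq_iff_diff_eq_0 less_irrefl)
    qed
    then show False using AE_False_pos[OF T] by simp
  qed
  moreover have "integral\<^sup>L ?M ?d \<ge> 0" using integral_nonneg_AE[OF nn] .
  moreover have "integral\<^sup>L ?M ?d = (LINT t|?M. a t * g (\<xi>2 + c t)) - (LINT t|?M. a t * g (\<xi>1 + c t))"
    by (rule Bochner_Integration.integral_diff[OF i2 i1])
  ultimately show ?thesis by linarith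
qed

lemma G_cont:
  fixes a c g :: "real \<Rightarrow> real"
  assumes a_int: "integrable (lebesgue_on {0..T}) a"
    and a_nn: "\<forall>t\<in>{0..T}. a t \<ge> 0"
    and c_cont: "continuous_on {0..T} c"
    and c_bd: "\<forall>t\<in>{0..T}. \<bar>c t\<bar> \<le> K"
    and g_cont: "continuous_on UNIV g"
  shows "continuous_on UNIV (\<lambda>\<xi>. LINT t|lebesgue_on {0..T}. a t * g (\<xi> + c t))"
  unfolding continuous_on_iff
proof (intro ballI allI impI)
  fix \<xi>0 e :: real assume e: "e > 0"
  let ?M = "lebesgue_on {0..T}"
  define I where "I = integral\<^sup>L ?M a"
  have I0: "I \<ge> 0" unfolding I_def using a_nn by (intro integral_nonneg_AE AE_I2) auto
  define S where "S = {\<xi>0 - K - 1..\<xi>0 + K + 1}"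
  have "uniformly_continuous_on S g"
    unfolding S_def by (rule compact_uniformly_continuous) (auto intro: continuous_on_subset[OF g_cont])
  moreover have "e / (I + 1) > 0" using e I0 by auto
  ultimately obtain d where d: "d > 0" and dd: "\<forall>u\<in>S. \<forall>v\<in>S. dist v u < d \<longrightarrow> dist (g v) (g u) < e / (I + 1)"
    unfolding uniformly_continuous_on_def by metis
  show "\<exists>d>0. \<forall>\<xi>'\<in>UNIV. dist \<xi>' \<xi>0 < d \<longrightarrow>
         dist (LINT t|?M. a t * g (\<xi>' + c t)) (LINT t|?M. a t * g (\<xi>0 + c t)) < e"
  proof (intro exI[of _ "min d 1"] conjI ballI impI)
    show "min d 1 > 0" using d by simp
    fix \<xi> :: real assume "dist \<xi> \<xi>0 < min d 1"
    then have x1: "\<bar>\<xi> - \<xi>0\<bar> < d" "\<bar>\<xi> - \<xi>0\<bar> < 1" by (auto simp: dist_real_def)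
    have i1: "integrable ?M (\<lambda>t. a t * g (\<xi> + c t))" by (rule int_prod[OF a_int a_nn c_cont g_cont])
    have i2: "integrable ?M (\<lambda>t. a t * g (\<xi>0 + c t))" by (rule int_prod[OF a_int a_nn c_cont g_cont])
    have pt: "\<bar>a t * g (\<xi> + c t) - a t * g (\<xi>0 + c t)\<bar> \<le> a t * (e / (I + 1))" if t: "t \<in> {0..T}" for t
    proof -
      have "\<bar>c t\<bar> \<le> K" using c_bd t by simp
      then have "\<xi> + c t \<in> S" "\<xi>0 + c t \<in> S" using x1 unfolding S_def by (auto simp: abs_le_iff)
      then have "\<bar>g (\<xi> + c t) - g (\<xi>0 + c t)\<bar> < e / (I + 1)"
        using dd x1 by (auto simp: dist_real_def)
      moreover have "a t \<ge> 0" using a_nn t by simp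
      ultimately show ?thesis
        by (metis right_diff_distrib abs_mult abs_of_nonneg less_imp_le mult_left_mono)
    qed
    have "dist (LINT t|?M. a t * g (\<xi> + c t)) (LINT t|?M. a t * g (\<xi>0 + c t))
        = \<bar>LINT t|?M. a t * g (\<xi> + c t) - a t * g (\<xi>0 + c t)\<bar>"
      by (simp add: dist_real_def Bochner_Integration.integral_diff[OF i1 i2])
    also have "\<dots> \<le> (LINT t|?M. a t * (e / (I + 1)))"
      by (rule integral_abs_bound_integral) (use i1 i2 a_int pt in auto)
    also have "\<dots> = I * (e / (I + 1))" unfolding I_def by simp
    also have "\<dots> < e" using I0 e by (simp add: field_simps)
    finally show "dist (LINT t|?M. a t * g (\<xi> + c t)) (LINT t|?M. a t * g (\<xi>0 + c t)) < e" .
  qed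
qed

lemma G_lower:
  fixes a c g :: "real \<Rightarrow> real"
  assumes a_int: "integrable (lebesgue_on {0..T}) a"
    and a_nn: "\<forall>t\<in>{0..T}. a t \<ge> 0"
    and a_m2: "m2 \<le> (LINT t|lebesgue_on {0..T}. a t)"
    and c_cont: "continuous_on {0..T} c"
    and c_bd: "\<forall>t\<in>{0..T}. \<bar>c t\<bar> \<le> K"
    and g_cont: "continuous_on UNIV g"
    and g_mono: "strict_mono g"
    and gpos: "g (\<xi> - K) \<ge> 0"
  shows "g (\<xi> - K) * m2 \<le> (LINT t|lebesgue_on {0..T}. a t * g (\<xi> + c t))"
proof -
  have "g (\<xi> - K) * m2 \<le> g (\<xi> - K) * (LINT t|lebesgue_on {0..T}. a t)"
    using gpos a_m2 by (simp add: mult_left_mono)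
  also have "\<dots> = (LINT t|lebesgue_on {0..T}. a t * g (\<xi> - K))" by simp
  also have "\<dots> \<le> (LINT t|lebesgue_on {0..T}. a t * g (\<xi> + c t))"
  proof (rule integral_mono)
    show "integrable (lebesgue_on {0..T}) (\<lambda>t. a t * g (\<xi> - K))" using a_int by auto
    show "integrable (lebesgue_on {0..T}) (\<lambda>t. a t * g (\<xi> + c t))"
      by (rule int_prod[OF a_int a_nn c_cont g_cont])
    fix t assume "t \<in> space (lebesgue_on {0..T})"
    then have t: "t \<in> {0..T}" by simp
    have "\<bar>c t\<bar> \<le> K" using c_bd t by simp
    then have "g (\<xi> - K) \<le> g (\<xi> + c t)"
      by (intro strict_mono_leD[OF g_mono]) (auto simp: abs_le_iff)
    then show "a t * g (\<xi> - K) \<le> a t * g (\<xi> + c t)" using a_nn t by (simp add: mult_left_mono)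
  qed
  finally show ?thesis .
qed

lemma G_upper:
  fixes a c g :: "real \<Rightarrow> real"
  assumes a_int: "integrable (lebesgue_on {0..T}) a"
    and a_nn: "\<forall>t\<in>{0..T}. a t \<ge> 0"
    and a_m2: "m2 \<le> (LINT t|lebesgue_on {0..T}. a t)"
    and c_cont: "continuous_on {0..T} c"
    and c_bd: "\<forall>t\<in>{0..T}. \<bar>c t\<bar> \<le> K"
    and g_cont: "continuous_on UNIV g"
    and g_mono: "strict_mono g"
    and gneg: "g (\<xi> + K) \<le> 0"
  shows "(LINT t|lebesgue_on {0..T}. a t * g (\<xi> + c t)) \<le> g (\<xi> + K) * m2"
proof -
  have "(LINT t|lebesgue_on {0..T}. a t * g (\<xi> + c t)) \<le> (LINT t|lebesgue_on {0..T}. a t * g (\<xi> + K))"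
  proof (rule integral_mono)
    show "integrable (lebesgue_on {0..T}) (\<lambda>t. a t * g (\<xi> + K))" using a_int by auto
    show "integrable (lebesgue_on {0..T}) (\<lambda>t. a t * g (\<xi> + c t))"
      by (rule int_prod[OF a_int a_nn c_cont g_cont])
    fix t assume "t \<in> space (lebesgue_on {0..T})"
    then have t: "t \<in> {0..T}" by simp
    have "\<bar>c t\<bar> \<le> K" using c_bd t by simp
    then have "g (\<xi> + c t) \<le> g (\<xi> + K)"
      by (intro strict_mono_leD[OF g_mono]) (auto simp: abs_le_iff)
    then show "a t * g (\<xi> + c t) \<le> a t * g (\<xi> + K)" using a_nn t by (simp add: mult_left_mono)
  qed
  also have "\<dots> = g (\<xi> + K) * (LINT t|lebesgue_on {0..T}. a t)" by simp
  also have "\<dots> \<le> g (\<xi> + K) * m2"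
    using gneg a_m2 by (simp add: mult_left_mono_neg)
  finally show ?thesis .
qed

lemma fixed_x:
  fixes a c g \<Phi> :: "real \<Rightarrow> real"
  assumes T: "T > 0"
    and a_int: "integrable (lebesgue_on {0..T}) a"
    and a_nn: "\<forall>t\<in>{0..T}. a t \<ge> 0"
    and a_pos: "AE t in lebesgue_on {0..T}. a t > 0"
    and m2: "m2 > 0"
    and a_m2: "m2 \<le> (LINT t|lebesgue_on {0..T}. a t)"
    and c_cont: "continuous_on {0..T} c"
    and c_bd: "\<forall>t\<in>{0..T}. \<bar>c t\<bar> \<le> K"
    and K: "K \<ge> 0"
    and g_cont: "continuous_on UNIV g"
    and g_mono: "strict_mono g"
    and g_inv: "\<And>z. g (\<Phi> z) = z"
    and \<Phi>_mono: "strict_mono \<Phi>"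
  shows "(\<exists>!\<xi>. (LINT t|lebesgue_on {0..T}. a t * g (\<xi> + c t)) = \<nu>)
     \<and> (\<forall>\<xi>. (LINT t|lebesgue_on {0..T}. a t * g (\<xi> + c t)) = \<nu> \<longrightarrow>
          \<Phi> (- (\<bar>\<nu>\<bar> / m2)) - K \<le> \<xi> \<and> \<xi> \<le> \<Phi> (\<bar>\<nu>\<bar> / m2) + K)"
proof -
  define G where "G \<xi> = (LINT t|lebesgue_on {0..T}. a t * g (\<xi> + c t))" for \<xi>
  define R where "R = \<bar>\<nu>\<bar> / m2"
  have R0: "R \<ge> 0" unfolding R_def using m2 by simp
  define \<xi>a where "\<xi>a = \<Phi> (- R) - K"
  define \<xi>b where "\<xi>b = \<Phi> R + K"
  have strict: "G x < G y" if "x < y" for x y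
    unfolding G_def by (rule G_strict[OF T a_int a_nn a_pos c_cont g_cont g_mono that])
  have cont: "continuous_on UNIV G"
    unfolding G_def by (rule G_cont[OF a_int a_nn c_cont c_bd g_cont])
  have "R * m2 \<le> G \<xi>b"
    unfolding G_def using G_lower[OF a_int a_nn a_m2 c_cont c_bd g_cont g_mono, of \<xi>b] R0
    by (simp add: \<xi>b_def g_inv)
  then have Gb: "\<nu> \<le> G \<xi>b" unfolding R_def using m2 by simp
  have "G \<xi>a \<le> (- R) * m2"
    unfolding G_def using G_upper[OF a_int a_nn a_m2 c_cont c_bd g_cont g_mono, of \<xi>a] R0
    by (simp add: \<xi>a_def g_inv)
  then have Ga: "G \<xi>a \<le> \<nu>" unfolding R_def using m2 by simp
  have ab: "\<xi>a \<le> \<xi>b" unfolding \<xi>a_def \<xi>b_def using R0 K strict_mono_leD[OF \<Phi>_mono, of "-R" R] by simp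
  obtain \<xi> where "G \<xi> = \<nu>"
    using IVT'[of G \<xi>a \<nu> \<xi>b] Ga Gb ab continuous_on_subset[OF cont] by blast
  moreover have "x = y" if "G x = \<nu>" "G y = \<nu>" for x y
    using strict[of x y] strict[of y x] that by (cases x y rule: linorder_cases) auto
  moreover have "\<xi>a \<le> x \<and> x \<le> \<xi>b" if "G x = \<nu>" for x
    using strict[of x \<xi>a] strict[of \<xi>b x] that Ga Gb by force
  ultimately show ?thesis unfolding G_def[symmetric] \<xi>a_def[symmetric] \<xi>b_def[symmetric] R_def[symmetric] by blast
qed

lemma Fc_bound:
  fixes f \<psi> :: "real \<Rightarrow> real"
  assumes f: "integrable (lebesgue_on {0..T}) f" and psi: "integrable (lebesgue_on {0..T}) \<psi>"
   and b: "AE t in lebesgue_on {0..T}. \<bar>f t\<bar> \<le> \<psi> t" and t: "t \<in> {0..T}"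
  shows "\<bar>LINT s|lebesgue_on {0..t}. f s\<bar> \<le> (LINT s|lebesgue_on {0..T}. \<psi> s)"
proof -
  have ft: "integrable (lebesgue_on {0..t}) f"
    using integrable_subinterval[OF f] t by auto
  have e1: "(LINT s|lebesgue_on {0..t}. f s) = (LINT s|lebesgue. indicator {0..t} s *\<^sub>R f s)"
    by (simp add: integral_restrict_space)
  have e2: "(LINT s|lebesgue_on {0..T}. \<psi> s) = (LINT s|lebesgue. indicator {0..T} s *\<^sub>R \<psi> s)"
    by (simp add: integral_restrict_space)
  have i1: "integrable lebesgue (\<lambda>s. indicator {0..t} s *\<^sub>R f s)"
    using ft by (simp add: integrable_restrict_space)
  have i2: "integrable lebesgue (\<lambda>s. indicator {0..T} s *\<^sub>R \<psi> s)"
    using psi by (simp add: integrable_restrict_space)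
  have b': "AE s in lebesgue. s \<in> {0..T} \<longrightarrow> \<bar>f s\<bar> \<le> \<psi> s"
    using b by (simp add: AE_restrict_space_iff)
  have "\<bar>LINT s|lebesgue. indicator {0..t} s *\<^sub>R f s\<bar> \<le> (LINT s|lebesgue. \<bar>indicator {0..t} s *\<^sub>R f s\<bar>)"
    by (rule integral_abs_bound)
  also have "\<dots> \<le> (LINT s|lebesgue. indicator {0..T} s *\<^sub>R \<psi> s)"
  proof (rule integral_mono_AE)
    show "integrable lebesgue (\<lambda>s. \<bar>indicator {0..t} s *\<^sub>R f s\<bar>)" using i1 by auto
    show "integrable lebesgue (\<lambda>s. indicator {0..T} s *\<^sub>R \<psi> s)" by (rule i2)
    show "AE s in lebesgue. \<bar>indicator {0..t} s *\<^sub>R f s\<bar> \<le> indicator {0..T} s *\<^sub>R \<psi> s"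
      using b' proof eventually_elim
      case (elim s) then show ?case using t by (auto simp: indicator_def)
    qed
  qed
  finally show ?thesis using e1 e2 by simp
qed

lemma Lp_int:
  fixes f :: "real \<Rightarrow> real"
  assumes "f \<in> Lp_space T p" "p > 1" "\<forall>t\<in>{0..T}. f t \<ge> 0"
  shows "integrable (lebesgue_on {0..T}) f"
proof (rule Bochner_Integration.integrable_bound[where f="\<lambda>t. 1 + \<bar>f t\<bar> powr p"])
  have fin: "finite_measure (lebesgue_on {0..T})"
    by (rule finite_measure_lebesgue_on[OF lmeasurable_interval(1)])
  show "integrable (lebesgue_on {0..T}) (\<lambda>t. 1 + \<bar>f t\<bar> powr p)"
    using assms(1) fin unfolding Lp_space_def by (auto intro!: Bochner_Integration.integrable_add finite_measure.integrable_const)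
  show "f \<in> borel_measurable (lebesgue_on {0..T})" using assms(1) unfolding Lp_space_def by auto
  show "AE t in lebesgue_on {0..T}. norm (f t) \<le> norm (1 + \<bar>f t\<bar> powr p)"
  proof (rule AE_I2)
    fix t
    show "norm (f t) \<le> norm (1 + \<bar>f t\<bar> powr p)"
    proof (cases "\<bar>f t\<bar> \<le> 1")
      case True then show ?thesis by (simp add: add_increasing2)
    next
      case False
      then have "\<bar>f t\<bar> powr 1 \<le> \<bar>f t\<bar> powr p" using assms(2) by (intro powr_mono) auto
      then show ?thesis using False by simp
    qed
  qed
qed



theorem lemma2p6:
  fixes T p \<nu>1 \<nu>2 :: real
    and \<Phi> :: "real \<Rightarrow> real"
    and A F :: "(real \<Rightarrow> real) \<Rightarrow> real \<Rightarrow> real"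
    and h1 h2 \<psi> :: "real \<Rightarrow> real"
  assumes T_pos: "T > 0"
    and p_gt1: "p > 1"
    and Phi_mono: "strict_mono \<Phi>"
    and Phi_homeo: "\<exists>\<Phi>'. homeomorphism UNIV UNIV \<Phi> \<Phi>'"
    and A_cont_val: "\<forall>x\<in>W1p T p. continuous_on {0..T} (A x)"
    and A_cont: "\<forall>x\<in>W1p T p. \<forall>\<epsilon>>0. \<exists>\<delta>>0. \<forall>y\<in>W1p T p.
                   sup_dist T x y < \<delta> \<longrightarrow> sup_dist T (A x) (A y) < \<epsilon>"
    and h1_cont: "continuous_on {0..T} h1" and h2_cont: "continuous_on {0..T} h2"
    and h1_nonneg: "\<forall>t\<in>{0..T}. h1 t \<ge> 0" and h2_nonneg: "\<forall>t\<in>{0..T}. h2 t \<ge> 0"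
    and h1_pos_ae: "AE t in lebesgue_on {0..T}. h1 t > 0"
    and h2_pos_ae: "AE t in lebesgue_on {0..T}. h2 t > 0"
    and h1_Lp: "(\<lambda>t. 1 / h1 t) \<in> Lp_space T p"
    and h2_Lp: "(\<lambda>t. 1 / h2 t) \<in> Lp_space T p"
    and A_bounds: "\<forall>x\<in>W1p T p. \<forall>t\<in>{0..T}. h1 t \<le> A x t \<and> A x t \<le> h2 t"
    and F_L1: "\<forall>x\<in>W1p T p. integrable (lebesgue_on {0..T}) (F x)"
    and F_cont: "\<forall>x\<in>W1p T p. \<forall>\<epsilon>>0. \<exists>\<delta>>0. \<forall>y\<in>W1p T p.
                   sup_dist T x y < \<delta> \<longrightarrow> L1_dist T (F x) (F y) < \<epsilon>"
    and psi_L1: "integrable (lebesgue_on {0..T}) \<psi>"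
    and psi_nonneg: "\<forall>t\<in>{0..T}. \<psi> t \<ge> 0"
    and F_bound: "\<forall>x\<in>W1p T p. AE t in lebesgue_on {0..T}. \<bar>F x t\<bar> \<le> \<psi> t"
  shows "(\<forall>x\<in>W1p T p. \<exists>!\<xi>::real.
            (LINT t|lebesgue_on {0..T}.
               (1 / A x t) * inv \<Phi> (\<xi> + (LINT s|lebesgue_on {0..t}. F x s))) = \<nu>2 - \<nu>1)
       \<and> (\<exists>c0>0. \<forall>x\<in>W1p T p. \<forall>\<xi>::real.
            (LINT t|lebesgue_on {0..T}.
               (1 / A x t) * inv \<Phi> (\<xi> + (LINT s|lebesgue_on {0..t}. F x s))) = \<nu>2 - \<nu>1
            \<longrightarrow> \<bar>\<xi>\<bar> \<le> c0)"
  proof -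
  obtain \<Phi>' where H: "homeomorphism UNIV UNIV \<Phi> \<Phi>'" using Phi_homeo by blast
  have inv1: "\<And>x. \<Phi>' (\<Phi> x) = x" and inv2: "\<And>y. \<Phi> (\<Phi>' y) = y"
    and gc: "continuous_on UNIV \<Phi>'"
    using H unfolding homeomorphism_def by auto
  have injP: "inj \<Phi>" by (metis inv1 injI)
  have ginv: "inv \<Phi> = \<Phi>'"
  proof
    fix y show "inv \<Phi> y = \<Phi>' y" by (metis inv2 inv_f_f[OF injP])
  qed
  have gmono: "strict_mono \<Phi>'"
  proof (rule strict_monoI)
    fix y1 y2 :: real assume lt: "y1 < y2"
    show "\<Phi>' y1 < \<Phi>' y2"
    proof (rule ccontr)
      assume "\<not> \<Phi>' y1 < \<Phi>' y2"
      then have "\<Phi> (\<Phi>' y2) \<le> \<Phi> (\<Phi>' y1)" using strict_mono_leD[OF Phi_mono] by simp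
      then show False using lt inv2 by simp
    qed
  qed
  define K where "K = (LINT s|lebesgue_on {0..T}. \<psi> s)"
  have K0: "K \<ge> 0" unfolding K_def using psi_nonneg by (intro integral_nonneg_AE AE_I2) auto
  have h1nn: "\<forall>t\<in>{0..T}. 1 / h1 t \<ge> 0" using h1_nonneg by simp
  have h2nn: "\<forall>t\<in>{0..T}. 1 / h2 t \<ge> 0" using h2_nonneg by simp
  have ih1: "integrable (lebesgue_on {0..T}) (\<lambda>t. 1 / h1 t)" by (rule Lp_int[OF h1_Lp p_gt1 h1nn])
  have ih2: "integrable (lebesgue_on {0..T}) (\<lambda>t. 1 / h2 t)" by (rule Lp_int[OF h2_Lp p_gt1 h2nn])
  define m2 where "m2 = (LINT t|lebesgue_on {0..T}. 1 / h2 t)"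
  have "m2 \<ge> 0" unfolding m2_def using h2nn by (intro integral_nonneg_AE AE_I2) auto
  moreover have "m2 \<noteq> 0"
  proof
    assume "m2 = 0"
    moreover have nn: "AE t in lebesgue_on {0..T}. 0 \<le> 1 / h2 t" using h2nn by (intro AE_I2) auto
    ultimately have "AE t in lebesgue_on {0..T}. 1 / h2 t = 0"
      using iffD1[OF integral_nonneg_eq_0_iff_AE[OF ih2 nn]] unfolding m2_def by simp
    then have "AE t in lebesgue_on {0..T}. False" using h2_pos_ae by eventually_elim auto
    then show False using AE_False_pos[OF T_pos] by simp
  qed
  ultimately have m2: "m2 > 0" by simp
  define \<nu> where "\<nu> = \<nu>2 - \<nu>1"
  define R where "R = \<bar>\<nu>\<bar> / m2"
  have main: "(\<exists>!\<xi>. (LINT t|lebesgue_on {0..T}. (1 / A x t) * \<Phi>' (\<xi> + (LINT s|lebesgue_on {0..t}. F x s))) = \<nu>)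
     \<and> (\<forall>\<xi>. (LINT t|lebesgue_on {0..T}. (1 / A x t) * \<Phi>' (\<xi> + (LINT s|lebesgue_on {0..t}. F x s))) = \<nu> \<longrightarrow>
          \<Phi> (- R) - K \<le> \<xi> \<and> \<xi> \<le> \<Phi> R + K)" if x: "x \<in> W1p T p" for x
    unfolding R_def
  proof (rule fixed_x[where a="\<lambda>t. 1 / A x t" and c="\<lambda>t. LINT s|lebesgue_on {0..t}. F x s"
        and \<nu>=\<nu> and g=\<Phi>' and \<Phi>=\<Phi>, OF T_pos _ _ _ m2 _ _ _ K0 gc gmono inv1 Phi_mono])
    have Ab: "\<forall>t\<in>{0..T}. h1 t \<le> A x t \<and> A x t \<le> h2 t" using A_bounds x by blast
    have Am: "A x \<in> borel_measurable (lebesgue_on {0..T})"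
      using A_cont_val x by (intro continuous_imp_measurable_on_sets_lebesgue) auto
    have pos: "0 < A x t" "1 / A x t \<le> 1 / h1 t" "1 / h2 t \<le> 1 / A x t"
      if "t \<in> {0..T}" "0 < h1 t" for t
    proof -
      have le: "h1 t \<le> A x t" "A x t \<le> h2 t" using Ab that(1) by auto
      show "0 < A x t" using le that(2) by linarith
      show "1 / A x t \<le> 1 / h1 t" using le that(2) by (intro divide_left_mono) auto
      show "1 / h2 t \<le> 1 / A x t" using le that(2) by (intro divide_left_mono) auto
    qed
    have ai: "integrable (lebesgue_on {0..T}) (\<lambda>t. 1 / A x t)"
    proof (rule Bochner_Integration.integrable_bound[OF ih1])
      show "(\<lambda>t. 1 / A x t) \<in> borel_measurable (lebesgue_on {0..T})"
        using borel_measurable_divide[OF borel_measurable_const[of 1] Am] by simp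
      show "AE t in lebesgue_on {0..T}. norm (1 / A x t) \<le> norm (1 / h1 t)"
        using h1_pos_ae AE_space
      proof eventually_elim
        case (elim t)
        then have t: "t \<in> {0..T}" by simp
        have "0 < A x t" "1 / A x t \<le> 1 / h1 t" using pos[OF t elim(1)] by auto
        then show ?case using elim(1) by simp
      qed
    qed
    show "integrable (lebesgue_on {0..T}) (\<lambda>t. 1 / A x t)" by (rule ai)
    show "\<forall>t\<in>{0..T}. 1 / A x t \<ge> 0"
    proof
      fix t assume t: "t \<in> {0..T}"
      have "0 \<le> h1 t" using h1_nonneg t by blast
      moreover have "h1 t \<le> A x t" using Ab t by blast
      ultimately show "1 / A x t \<ge> 0" by simp
    qed
    show "AE t in lebesgue_on {0..T}. 1 / A x t > 0"
      using h1_pos_ae AE_space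
    proof eventually_elim
      case (elim t)
      then have t: "t \<in> {0..T}" by simp
      show ?case using pos(1)[OF t elim(1)] by simp
    qed
    show "m2 \<le> (LINT t|lebesgue_on {0..T}. 1 / A x t)"
      unfolding m2_def
    proof (rule integral_mono_AE[OF ih2 ai])
      show "AE t in lebesgue_on {0..T}. 1 / h2 t \<le> 1 / A x t"
        using h1_pos_ae AE_space
      proof eventually_elim
        case (elim t)
        then have t: "t \<in> {0..T}" by simp
        show ?case using pos(3)[OF t elim(1)] .
      qed
    qed
    have Fi: "integrable (lebesgue_on {0..T}) (F x)" using F_L1 x by blast
    show "continuous_on {0..T} (\<lambda>t. LINT s|lebesgue_on {0..t}. F x s)"
      by (rule indefinite_integral_continuous_real[OF Fi])
    have Fb: "AE t in lebesgue_on {0..T}. \<bar>F x t\<bar> \<le> \<psi> t" using F_bound x by blast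
    show "\<forall>t\<in>{0..T}. \<bar>LINT s|lebesgue_on {0..t}. F x s\<bar> \<le> K"
    proof
      fix t assume t: "t \<in> {0..T}"
      show "\<bar>LINT s|lebesgue_on {0..t}. F x s\<bar> \<le> K"
        unfolding K_def by (rule Fc_bound[OF Fi psi_L1 Fb t])
    qed
  qed
  show ?thesis
  proof
    show "\<forall>x\<in>W1p T p. \<exists>!\<xi>::real.
            (LINT t|lebesgue_on {0..T}.
               (1 / A x t) * inv \<Phi> (\<xi> + (LINT s|lebesgue_on {0..t}. F x s))) = \<nu>2 - \<nu>1"
      using main unfolding ginv \<nu>_def by blast
    show "\<exists>c0>0. \<forall>x\<in>W1p T p. \<forall>\<xi>::real.
            (LINT t|lebesgue_on {0..T}.
               (1 / A x t) * inv \<Phi> (\<xi> + (LINT s|lebesgue_on {0..t}. F x s))) = \<nu>2 - \<nu>1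
            \<longrightarrow> \<bar>\<xi>\<bar> \<le> c0"
    proof (intro exI[of _ "\<bar>\<Phi> (- R) - K\<bar> + \<bar>\<Phi> R + K\<bar> + 1"] conjI ballI allI impI)
      show "\<bar>\<Phi> (- R) - K\<bar> + \<bar>\<Phi> R + K\<bar> + 1 > 0" by simp
      fix x \<xi> assume x: "x \<in> W1p T p" and eq: "(LINT t|lebesgue_on {0..T}.
               (1 / A x t) * inv \<Phi> (\<xi> + (LINT s|lebesgue_on {0..t}. F x s))) = \<nu>2 - \<nu>1"
      then have "\<Phi> (- R) - K \<le> \<xi> \<and> \<xi> \<le> \<Phi> R + K" using main[OF x] unfolding ginv \<nu>_def by blast
      then show "\<bar>\<xi>\<bar> \<le> \<bar>\<Phi> (- R) - K\<bar> + \<bar>\<Phi> R + K\<bar> + 1" by linarith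
    qed
  qed
qed

end
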